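(* Let $G$ be a graph without isolated vertices and $T$ a solution counting decision tree for $\varphi(G)$. Let $u$ be a node of $T$ labelled by a variable $x$ that is not forced to $1$ by $A_u$, and let $vp$ and $vn$ be the heads of the outgoing edges of $u$ labelled $x$ and $\neg x$ respectively. Let $S\subseteq V(G)$ contain a neighbour $y$ of $x$, and let $p$ be the weight of the edge $(u,vp)$. Then $p\,\alpha^{vp}(S)+(1-p)\,\alpha^{vn}(S\setminus\{y\})\leq\alpha^u(S)$.
   Context: $\varphi(G)$ is the CNF on variables $V(G)$ with clauses $(u\vee v)$ for $\{u,v\}\in E(G)$. Boolean functions are identified with their sets of satisfying assignments (sets of literals); $F|_S$ is the function on the remaining variables whose satisfying assignments are the $S'$ with $S\cup S'$ satisfying $F$; $|\cdot|$ counts satisfying assignments. Decision tree for $F$ (not constant false): root labelled by some $x\in Var(F)$; for each literal $\ell\in\{x,\neg x\}$ occurring in some satisfying assignment, an outgoing edge labelled $\ell$ whose head is a leaf if $|Var(F)|=1$ and otherwise the root of a decision tree for $F|_\ell$. A solution counting decision tree additionally gives the edge leaving node $w$ with label $\ell$ the weight $|F|_{A_w\cup\{\ell\}}|/|F|_{A_w}|$, where $A_w$ is the set of literals labelling the root-$w$ path. A variable $z$ is forced to $1$ by $A_w$ if some neighbour $z'$ of $z$ in $G$ has $\neg z'\in A_w$. $N^w(z)$ is the set of neighbours of $z$ that do not occur in $A_w$ and are not forced to $1$ by $A_w$. For $d\geq 0$, $c_d=1-2^{-(2d+1)}$, and $\alpha^w(S)=\prod_{z\in S}c_{|N^w(z)|}$.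 *)

theory Defs
  imports Complex_Main
begin

text \<open>Graphs: a finite vertex set V and an edge set E of two-element subsets of V.
  Literals are pairs (z, b): (z, True) is the literal z, (z, False) is the literal not z.\<close>

definition graph :: "'v set \<Rightarrow> 'v set set \<Rightarrow> bool" where
  "graph V E \<longleftrightarrow> finite V \<and> (\<forall>e\<in>E. \<exists>u v. e = {u, v} \<and> u \<noteq> v \<and> u \<in> V \<and> v \<in> V)"

definition adj :: "'v set set \<Rightarrow> 'v \<Rightarrow> 'v \<Rightarrow> bool" where
  "adj E u v \<longleftrightarrow> u \<noteq> v \<and> {u, v} \<in> E"

definition no_isolated :: "'v set \<Rightarrow> 'v set set \<Rightarrow> bool" where
  "no_isolated V E \<longleftrightarrow> (\<forall>v\<in>V. \<exists>w. adj E v w)"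

definition lit_vars :: "('v \<times> bool) set \<Rightarrow> 'v set" where
  "lit_vars A = fst ` A"

definition sat_phi :: "'v set \<Rightarrow> 'v set set \<Rightarrow> ('v \<times> bool) set set" where
  "sat_phi V E = {L. L \<subseteq> V \<times> UNIV \<and> (\<forall>v\<in>V. ((v, True) \<in> L) \<noteq> ((v, False) \<in> L))
                    \<and> (\<forall>u v. adj E u v \<longrightarrow> (u, True) \<in> L \<or> (v, True) \<in> L)}"

definition restr_sat :: "'v set \<Rightarrow> 'v set set \<Rightarrow> ('v \<times> bool) set \<Rightarrow> ('v \<times> bool) set set" where
  "restr_sat V E A = {S'. S' \<subseteq> (V - lit_vars A) \<times> UNIV \<and> A \<union> S' \<in> sat_phi V E}"

definition cnt :: "'v set \<Rightarrow> 'v set set \<Rightarrow> ('v \<times> bool) set \<Rightarrow> nat" where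
  "cnt V E A = card (restr_sat V E A)"

text \<open>Decision trees: a node carries its variable and optional heads of the edges labelled
  x (positive) and not x (negative).\<close>
datatype 'v dtree = Leaf | Node 'v "'v dtree option" "'v dtree option"

fun is_dt :: "'v set \<Rightarrow> 'v set set \<Rightarrow> ('v \<times> bool) set \<Rightarrow> 'v dtree \<Rightarrow> bool" where
  "is_dt V E A Leaf = False"
| "is_dt V E A (Node x cp cn) =
     (0 < cnt V E A \<and> x \<in> V - lit_vars A \<and>
      (case cp of None \<Rightarrow> cnt V E (insert (x, True) A) = 0
        | Some t \<Rightarrow> 0 < cnt V E (insert (x, True) A) \<and>
             (if V - lit_vars A = {x} then t = Leaf else is_dt V E (insert (x, True) A) t)) \<and>
      (case cn of None \<Rightarrow> cnt V E (insert (x, False) A) = 0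
        | Some t \<Rightarrow> 0 < cnt V E (insert (x, False) A) \<and>
             (if V - lit_vars A = {x} then t = Leaf else is_dt V E (insert (x, False) A) t)))"

text \<open>reach T A w: w is (the subtree at) a node of T and A = A_w is the set of literals on the
  path from the root to w.\<close>
inductive reach :: "'v dtree \<Rightarrow> ('v \<times> bool) set \<Rightarrow> 'v dtree \<Rightarrow> bool" for T where
  root: "reach T {} T"
| pos: "reach T A (Node x (Some c) n) \<Longrightarrow> reach T (insert (x, True) A) c"
| neg: "reach T A (Node x p (Some c)) \<Longrightarrow> reach T (insert (x, False) A) c"

definition edge_weight :: "'v set \<Rightarrow> 'v set set \<Rightarrow> ('v \<times> bool) set \<Rightarrow> ('v \<times> bool) \<Rightarrow> real" where
  "edge_weight V E A l = real (cnt V E (insert l A)) / real (cnt V E A)"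

definition forced :: "'v set set \<Rightarrow> ('v \<times> bool) set \<Rightarrow> 'v \<Rightarrow> bool" where
  "forced E A z \<longleftrightarrow> (\<exists>z'. adj E z z' \<and> (z', False) \<in> A)"

definition Nbr :: "'v set set \<Rightarrow> ('v \<times> bool) set \<Rightarrow> 'v \<Rightarrow> 'v set" where
  "Nbr E A z = {z'. adj E z z' \<and> z' \<notin> lit_vars A \<and> \<not> forced E A z'}"

definition c_const :: "nat \<Rightarrow> real" where
  "c_const d = 1 - 2 powi (- (2 * int d + 1))"

definition alpha :: "'v set set \<Rightarrow> ('v \<times> bool) set \<Rightarrow> 'v set \<Rightarrow> real" where
  "alpha E A S = (\<Prod>z\<in>S. c_const (card (Nbr E A z)))"

end

theory Submission
  imports Defs
begin

lemma c_closed: "c_const d = 1 - 1 / 2 ^ (2*d+1)"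
proof -
  have e: "-(2*int d+1) = - int (2*d+1)" by simp
  have "(2::real) powi (-(2*int d+1)) = inverse (2^(2*d+1))"
    unfolding e power_int_minus power_int_of_nat ..
  then show ?thesis unfolding c_const_def by (simp add: inverse_eq_divide)
qed

lemma c_nonneg: "0 \<le> c_const d"
proof -
  have "(1::real) \<le> 2 ^ (2*d+1)" by (rule one_le_power) simp
  then show ?thesis unfolding c_closed by simp
qed

lemma c_le1: "c_const d \<le> 1"
  unfolding c_closed by simp

lemma c_mono: "d \<le> e \<Longrightarrow> c_const d \<le> c_const e"
proof -
  assume "d \<le> e"
  then have "(2::real) ^ (2*d+1) \<le> 2 ^ (2*e+1)" by (intro power_increasing) auto
  then have "1 / (2::real) ^ (2*e+1) \<le> 1 / 2 ^ (2*d+1)"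
    by (intro divide_left_mono) auto
  then show ?thesis unfolding c_closed by simp
qed

lemma c_step:
  assumes "1/2 \<le> p" "p \<le> 1"
  shows "p * c_const k + (1 - p) \<le> c_const (Suc k)"
proof -
  define t :: real where "t = 1 / 2 ^ (2*k+1)"
  have t0: "0 \<le> t" unfolding t_def by simp
  have ck: "c_const k = 1 - t" unfolding c_closed t_def by simp
  have ex: "2 * Suc k + 1 = (2*k+1) + 2" by simp
  have p4: "(2::real) ^ (2 * Suc k + 1) = 2 ^ (2*k+1) * 4" unfolding ex power_add by simp
  have "c_const (Suc k) = 1 - 1 / (2 ^ (2*k+1) * 4)" unfolding c_closed p4 ..
  also have "1 / ((2::real) ^ (2*k+1) * 4) = t / 4" unfolding t_def by simp
  finally have cs: "c_const (Suc k) = 1 - t/4" .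
  have "t/4 \<le> p * t" using assms t0 using mult_right_mono[of "1/4" p t] by simp
  then show ?thesis unfolding ck cs by (simp add: algebra_simps)
qed

lemma reach_dt:
  "reach T A w \<Longrightarrow> is_dt V E {} T \<Longrightarrow> w = Leaf \<or> is_dt V E A w"
proof (induction rule: reach.induct)
  case root then show ?case by simp
next
  case (pos A x c n)
  then have D: "is_dt V E A (Node x (Some c) n)" by simp
  then have "if V - lit_vars A = {x} then c = Leaf else is_dt V E (insert (x, True) A) c"
    using D unfolding is_dt.simps option.case by (elim conjE) assumption
  then show ?case by (cases "V - lit_vars A = {x}") (simp_all only: if_True if_False simp_thms)
next
  case (neg A x p c)
  then have D: "is_dt V E A (Node x p (Some c))" by simp
  then have "if V - lit_vars A = {x} then c = Leaf else is_dt V E (insert (x, False) A) c"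
    using D unfolding is_dt.simps option.case by (elim conjE) assumption
  then show ?case by (cases "V - lit_vars A = {x}") (simp_all only: if_True if_False simp_thms)
qed

lemma Nbr_mono: "Nbr E (insert l A) z \<subseteq> Nbr E A z"
  unfolding Nbr_def forced_def lit_vars_def by auto

lemma Nbr_finite: "graph V E \<Longrightarrow> finite (Nbr E A z)"
proof -
  assume g: "graph V E"
  have "Nbr E A z \<subseteq> V"
  proof
    fix w assume "w \<in> Nbr E A z"
    then have "{z, w} \<in> E" unfolding Nbr_def adj_def by auto
    with g obtain u v where "{z,w} = {u,v}" "u \<in> V" "v \<in> V" unfolding graph_def by blast
    then show "w \<in> V" by (metis doubleton_eq_iff)
  qed
  with g show ?thesis unfolding graph_def using finite_subset by blast
qed

lemma alpha_mono:
  assumes "finite S" "\<And>z. z \<in> S \<Longrightarrow> card (Nbr E B z) \<le> card (Nbr E A z)"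
  shows "alpha E B S \<le> alpha E A S"
  unfolding alpha_def
  by (rule prod_mono) (use assms c_nonneg c_mono in auto)

lemma alpha_nonneg: "0 \<le> alpha E A S"
  unfolding alpha_def by (simp add: prod_nonneg c_nonneg)

lemma sat_finite: "finite V \<Longrightarrow> finite (restr_sat V E A)"
proof -
  assume "finite V"
  then have "finite (Pow (V \<times> (UNIV::bool set)))" by simp
  moreover have "restr_sat V E A \<subseteq> Pow (V \<times> (UNIV::bool set))"
  proof
    fix S' assume "S' \<in> restr_sat V E A"
    then have "S' \<subseteq> (V - lit_vars A) \<times> UNIV" unfolding restr_sat_def mem_Collect_eq by (rule conjunct1)
    then show "S' \<in> Pow (V \<times> (UNIV::bool set))" by blast
  qed
  ultimately show ?thesis using finite_subset by blast
qed

lemma cnt_FT: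
  assumes "finite V" "x \<in> V" "x \<notin> lit_vars A"
  shows "cnt V E (insert (x, False) A) \<le> cnt V E (insert (x, True) A)"
proof -
  have "restr_sat V E (insert (x, False) A) \<subseteq> restr_sat V E (insert (x, True) A)"
  proof
    fix S' assume S': "S' \<in> restr_sat V E (insert (x, False) A)"
    have lv: "lit_vars (insert (x, False) A) = insert x (lit_vars A)"
      "lit_vars (insert (x, True) A) = insert x (lit_vars A)" by (simp_all add: lit_vars_def)
    have SS: "S' \<subseteq> (V - lit_vars (insert (x, False) A)) \<times> UNIV \<and> insert (x, False) A \<union> S' \<in> sat_phi V E"
      using S' unfolding restr_sat_def mem_Collect_eq .
    have sub: "S' \<subseteq> (V - insert x (lit_vars A)) \<times> UNIV" using conjunct1[OF SS] unfolding lv(1) .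
    have L: "insert (x, False) A \<union> S' \<in> sat_phi V E" using conjunct2[OF SS] .
    have nx: "(x, b) \<notin> S'" for b
    proof
      assume "(x, b) \<in> S'"
      then have "(x, b) \<in> (V - insert x (lit_vars A)) \<times> UNIV" by (rule subsetD[OF sub])
      then show False by simp
    qed
    have nA: "(x, b) \<notin> A" for b
    proof
      assume "(x, b) \<in> A"
      then have "fst (x, b) \<in> fst ` A" by (rule imageI)
      then show False using assms(3) unfolding lit_vars_def by simp
    qed
    have LL: "insert (x, False) A \<union> S' \<subseteq> V \<times> UNIV \<and> (\<forall>v\<in>V. ((v, True) \<in> insert (x, False) A \<union> S') \<noteq> ((v, False) \<in> insert (x, False) A \<union> S'))
      \<and> (\<forall>u v. adj E u v \<longrightarrow> (u, True) \<in> insert (x, False) A \<union> S' \<or> (v, True) \<in> insert (x, False) A \<union> S')"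
      using L unfolding sat_phi_def mem_Collect_eq .
    note L1 = conjunct1[OF LL] and L2 = conjunct1[OF conjunct2[OF LL]] and L3 = conjunct2[OF conjunct2[OF LL]]
    have M1: "insert (x, True) A \<union> S' \<subseteq> V \<times> UNIV" using L1 assms(2) by blast
    have M2: "((v, True) \<in> insert (x, True) A \<union> S') \<noteq> ((v, False) \<in> insert (x, True) A \<union> S')"
      if "v \<in> V" for v
    proof (cases "v = x")
      case True then show ?thesis using nx nA by simp
    next
      case False then show ?thesis using L2 that by simp
    qed
    have M3: "(u, True) \<in> insert (x, True) A \<union> S' \<or> (v, True) \<in> insert (x, True) A \<union> S'"
      if "adj E u v" for u v using L3 that by blast
    have "insert (x, True) A \<union> S' \<in> sat_phi V E"
      unfolding sat_phi_def mem_Collect_eq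
      by (intro conjI ballI allI impI) (rule M1, erule M2, erule M3)
    then show "S' \<in> restr_sat V E (insert (x, True) A)"
      using sub lv(2) unfolding restr_sat_def by simp
  qed
  then show ?thesis unfolding cnt_def using sat_finite[OF assms(1)] card_mono by blast
qed

lemma restr_insert:
  assumes "x \<in> V" "x \<notin> lit_vars A"
  shows "insert (x, b) ` restr_sat V E (insert (x, b) A) \<subseteq> restr_sat V E A"
    and "inj_on (insert (x, b)) (restr_sat V E (insert (x, b) A))"
proof -
  have lv: "lit_vars (insert (x, b) A) = insert x (lit_vars A)" by (simp add: lit_vars_def)
  have nx: "(x, c) \<notin> S'" if "S' \<in> restr_sat V E (insert (x, b) A)" for S' c
    using that lv unfolding restr_sat_def by blast
  show "insert (x, b) ` restr_sat V E (insert (x, b) A) \<subseteq> restr_sat V E A"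
  proof
    fix S assume "S \<in> insert (x, b) ` restr_sat V E (insert (x, b) A)"
    then obtain S' where S': "S' \<in> restr_sat V E (insert (x, b) A)" "S = insert (x, b) S'" by blast
    have s1: "S' \<subseteq> (V - insert x (lit_vars A)) \<times> UNIV" and s2: "insert (x, b) A \<union> S' \<in> sat_phi V E"
      using S'(1) lv unfolding restr_sat_def by simp_all
    have "S \<subseteq> (V - lit_vars A) \<times> UNIV" using s1 S'(2) assms by blast
    moreover have "A \<union> S = insert (x, b) A \<union> S'" using S'(2) by blast
    ultimately show "S \<in> restr_sat V E A" using s2 unfolding restr_sat_def by simp
  qed
  show "inj_on (insert (x, b)) (restr_sat V E (insert (x, b) A))"
  proof (rule inj_onI)
    fix S1 S2 assume "S1 \<in> restr_sat V E (insert (x, b) A)" "S2 \<in> restr_sat V E (insert (x, b) A)"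
      "insert (x, b) S1 = insert (x, b) S2"
    then show "S1 = S2" using nx by (metis insert_ident)
  qed
qed

lemma cnt_le:
  assumes "finite V" "x \<in> V" "x \<notin> lit_vars A"
  shows "cnt V E (insert (x, b) A) \<le> cnt V E A"
proof -
  have "card (insert (x, b) ` restr_sat V E (insert (x, b) A)) \<le> card (restr_sat V E A)"
    by (rule card_mono[OF sat_finite[OF assms(1)] restr_insert(1)[OF assms(2,3)]])
  moreover have "card (insert (x, b) ` restr_sat V E (insert (x, b) A)) = card (restr_sat V E (insert (x, b) A))"
    by (rule card_image[OF restr_insert(2)[OF assms(2,3)]])
  ultimately show ?thesis unfolding cnt_def by linarith
qed

lemma sat_excl:
  assumes "x \<in> V" "S' \<in> restr_sat V E A"
  shows "((x, True) \<in> A \<union> S') \<noteq> ((x, False) \<in> A \<union> S')"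
proof -
  have SS: "S' \<subseteq> (V - lit_vars A) \<times> UNIV \<and> A \<union> S' \<in> sat_phi V E"
    using assms(2) unfolding restr_sat_def mem_Collect_eq .
  have "A \<union> S' \<subseteq> V \<times> UNIV \<and> (\<forall>v\<in>V. ((v, True) \<in> A \<union> S') \<noteq> ((v, False) \<in> A \<union> S'))
      \<and> (\<forall>u v. adj E u v \<longrightarrow> (u, True) \<in> A \<union> S' \<or> (v, True) \<in> A \<union> S')"
    using conjunct2[OF SS] unfolding sat_phi_def mem_Collect_eq .
  then have all: "\<forall>v\<in>V. ((v, True) \<in> A \<union> S') \<noteq> ((v, False) \<in> A \<union> S')"
    by (rule conjunct1[OF conjunct2])
  show ?thesis using bspec[OF all assms(1)] .
qed

lemma restr_decomp:
  assumes "x \<in> V" "x \<notin> lit_vars A" "S' \<in> restr_sat V E A" "(x, c) \<in> S'"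
  shows "S' \<in> insert (x, c) ` restr_sat V E (insert (x, c) A)"
proof -
  have SS: "S' \<subseteq> (V - lit_vars A) \<times> UNIV \<and> A \<union> S' \<in> sat_phi V E"
    using assms(3) unfolding restr_sat_def mem_Collect_eq .
  have L: "A \<union> S' \<in> sat_phi V E" by (rule conjunct2[OF SS])
  have sub: "S' \<subseteq> (V - lit_vars A) \<times> UNIV" by (rule conjunct1[OF SS])
  have ex: "((x, True) \<in> A \<union> S') \<noteq> ((x, False) \<in> A \<union> S')" by (rule sat_excl[OF assms(1,3)])
  have nc: "(x, \<not> c) \<notin> S'"
  proof
    assume "(x, \<not> c) \<in> S'"
    then show False using ex assms(4) by (cases c) auto
  qed
  have lv: "lit_vars (insert (x, c) A) = insert x (lit_vars A)" by (simp add: lit_vars_def)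
  define S'' where "S'' = S' - {(x, c)}"
  have Seq: "S' = insert (x, c) S''" unfolding S''_def using assms(4) by blast
  have sub2: "S'' \<subseteq> (V - lit_vars (insert (x, c) A)) \<times> UNIV"
  proof
    fix q assume q: "q \<in> S''"
    obtain v d where vd: "q = (v, d)" by (cases q)
    have m: "(v, d) \<in> S'" "(v, d) \<noteq> (x, c)" using q vd unfolding S''_def by blast+
    have "v \<noteq> x"
    proof
      assume vx: "v = x"
      with m(2) have "d = (\<not> c)" by blast
      with vx m(1) nc show False by blast
    qed
    moreover have "(v, d) \<in> (V - lit_vars A) \<times> UNIV" using m(1) sub by blast
    ultimately show "q \<in> (V - lit_vars (insert (x, c) A)) \<times> UNIV" unfolding lv vd by blast
  qed
  have eq: "insert (x, c) A \<union> S'' = A \<union> S'" unfolding S''_def using assms(4) by blast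
  have "S'' \<in> restr_sat V E (insert (x, c) A)"
    unfolding restr_sat_def mem_Collect_eq eq by (rule conjI[OF sub2 L])
  then have "insert (x, c) S'' \<in> insert (x, c) ` restr_sat V E (insert (x, c) A)" by (rule imageI)
  then show ?thesis using Seq by simp
qed

lemma cnt_split:
  assumes "finite V" "x \<in> V" "x \<notin> lit_vars A"
  shows "cnt V E A \<le> cnt V E (insert (x, True) A) + cnt V E (insert (x, False) A)"
proof -
  define UT where "UT = insert (x, True) ` restr_sat V E (insert (x, True) A)"
  define UF where "UF = insert (x, False) ` restr_sat V E (insert (x, False) A)"
  have nA: "(x, c) \<notin> A" for c
  proof
    assume "(x, c) \<in> A"
    then have "fst (x, c) \<in> fst ` A" by (rule imageI)
    then show False using assms(3) unfolding lit_vars_def by simp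
  qed
  have sub: "restr_sat V E A \<subseteq> UT \<union> UF"
  proof
    fix S' assume S': "S' \<in> restr_sat V E A"
    have ex: "((x, True) \<in> A \<union> S') \<noteq> ((x, False) \<in> A \<union> S')" by (rule sat_excl[OF assms(2) S'])
    have "(x, True) \<in> S' \<or> (x, False) \<in> S'" using ex nA by blast
    then show "S' \<in> UT \<union> UF"
    proof
      assume "(x, True) \<in> S'"
      then have "S' \<in> UT" unfolding UT_def by (rule restr_decomp[OF assms(2,3) S'])
      then show ?thesis by (rule UnI1)
    next
      assume "(x, False) \<in> S'"
      then have "S' \<in> UF" unfolding UF_def by (rule restr_decomp[OF assms(2,3) S'])
      then show ?thesis by (rule UnI2)
    qed
  qed
  have fin: "finite (UT \<union> UF)" unfolding UT_def UF_def
    by (intro finite_UnI finite_imageI sat_finite assms(1))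
  have c1: "card (restr_sat V E A) \<le> card (UT \<union> UF)" by (rule card_mono[OF fin sub])
  have c2: "card (UT \<union> UF) \<le> card UT + card UF" by (rule card_Un_le)
  have c3: "card UT = cnt V E (insert (x, True) A)" unfolding UT_def cnt_def
    by (rule card_image[OF restr_insert(2)[OF assms(2,3)]])
  have c4: "card UF = cnt V E (insert (x, False) A)" unfolding UF_def cnt_def
    by (rule card_image[OF restr_insert(2)[OF assms(2,3)]])
  show ?thesis using c1 c2 c3 c4 unfolding cnt_def by linarith
qed

lemma alpha_split:
  assumes "finite S" "y \<in> S"
  shows "alpha E B S = c_const (card (Nbr E B y)) * alpha E B (S - {y})"
  unfolding alpha_def by (rule prod.remove[OF assms])

theorem lemma14:
  fixes V :: "'v set" and E :: "'v set set" and T :: "'v dtree"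
  assumes "graph V E" and "no_isolated V E"
    and "is_dt V E {} T"
    and "reach T A (Node x (Some vp) (Some vn))"
    and "\<not> forced E A x"
    and "S \<subseteq> V" and "y \<in> S" and "adj E x y"
    and "p = edge_weight V E A (x, True)"
  shows "p * alpha E (insert (x, True) A) S
           + (1 - p) * alpha E (insert (x, False) A) (S - {y}) \<le> alpha E A S"
proof -
  have finV: "finite V" using assms(1) unfolding graph_def by (rule conjunct1)
  have "Node x (Some vp) (Some vn) = Leaf \<or> is_dt V E A (Node x (Some vp) (Some vn))"
    by (rule reach_dt[OF assms(4) assms(3)])
  then have D: "is_dt V E A (Node x (Some vp) (Some vn))" by simp
  have n0: "0 < cnt V E A" using D unfolding is_dt.simps by (rule conjunct1)
  have xV: "x \<in> V - lit_vars A" using D unfolding is_dt.simps by (rule conjunct1[OF conjunct2])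
  have xV1: "x \<in> V" and xV2: "x \<notin> lit_vars A" using xV by blast+
  define a where "a = cnt V E (insert (x, True) A)"
  define b where "b = cnt V E (insert (x, False) A)"
  define n where "n = cnt V E A"
  have ba: "b \<le> a" unfolding a_def b_def by (rule cnt_FT[OF finV xV1 xV2])
  have nab: "n \<le> a + b" unfolding a_def b_def n_def by (rule cnt_split[OF finV xV1 xV2])
  have an: "a \<le> n" unfolding a_def n_def by (rule cnt_le[OF finV xV1 xV2])
  have n0': "0 < n" unfolding n_def by (rule n0)
  have pdef: "p = real a / real n" using assms(9) unfolding edge_weight_def a_def n_def by simp
  have rn: "0 < real n" using n0' by simp
  have "real n \<le> 2 * real a" using ba nab by linarith
  then have p_half: "1/2 \<le> p" unfolding pdef using rn by (simp add: field_simps)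
  have "real a \<le> real n" using an by simp
  then have p_le1: "p \<le> 1" unfolding pdef using rn by (simp add: field_simps)
  have p0: "0 \<le> p" using p_half by linarith
  have finS: "finite S" using finite_subset[OF assms(6) finV] .
  have adjyx: "adj E y x" using assms(8) unfolding adj_def by (auto simp: insert_commute)
  have xN: "x \<in> Nbr E A y" unfolding Nbr_def using adjyx xV2 assms(5) by simp
  have finN: "finite (Nbr E A y)" by (rule Nbr_finite[OF assms(1)])
  have lvT: "x \<in> lit_vars (insert (x, True) A)" unfolding lit_vars_def by simp
  have "Nbr E (insert (x, True) A) y \<subseteq> Nbr E A y - {x}"
    using Nbr_mono[of E "(x, True)" A y] lvT unfolding Nbr_def by blast
  then have "card (Nbr E (insert (x, True) A) y) \<le> card (Nbr E A y - {x})"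
    by (rule card_mono[OF finite_Diff[OF finN]])
  also have "\<dots> = card (Nbr E A y) - 1" by (rule card_Diff_singleton[OF xN])
  finally have cT: "card (Nbr E (insert (x, True) A) y) \<le> card (Nbr E A y) - 1" .
  have dpos: "0 < card (Nbr E A y)" using finN xN card_gt_0_iff by blast
  obtain k where dk: "card (Nbr E A y) = Suc k" using dpos gr0_implies_Suc by blast
  have cT': "card (Nbr E (insert (x, True) A) y) \<le> k" using cT dk by simp
  define P where "P = alpha E A (S - {y})"
  define Q1 where "Q1 = alpha E (insert (x, True) A) (S - {y})"
  define Q2 where "Q2 = alpha E (insert (x, False) A) (S - {y})"
  define a1 where "a1 = c_const (card (Nbr E (insert (x, True) A) y))"
  have finSy: "finite (S - {y})" using finS by simp
  have mono_l: "card (Nbr E (insert l A) z) \<le> card (Nbr E A z)" for l z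
    by (rule card_mono[OF Nbr_finite[OF assms(1)] Nbr_mono])
  have Q1P: "Q1 \<le> P" unfolding Q1_def P_def by (rule alpha_mono[OF finSy mono_l])
  have Q2P: "Q2 \<le> P" unfolding Q2_def P_def by (rule alpha_mono[OF finSy mono_l])
  have Q10: "0 \<le> Q1" unfolding Q1_def by (rule alpha_nonneg)
  have Q20: "0 \<le> Q2" unfolding Q2_def by (rule alpha_nonneg)
  have P0: "0 \<le> P" unfolding P_def by (rule alpha_nonneg)
  have a1k: "a1 \<le> c_const k" unfolding a1_def by (rule c_mono[OF cT'])
  have ck0: "0 \<le> c_const k" by (rule c_nonneg)
  have LHS1: "alpha E (insert (x, True) A) S = a1 * Q1"
    unfolding a1_def Q1_def by (rule alpha_split[OF finS assms(7)])
  have RHS: "alpha E A S = c_const (Suc k) * P"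
    unfolding P_def using alpha_split[OF finS assms(7), of E A] dk by simp
  have "a1 * Q1 \<le> c_const k * P" by (rule mult_mono[OF a1k Q1P ck0 Q10])
  then have s1: "p * (a1 * Q1) \<le> p * (c_const k * P)" by (rule mult_left_mono[OF _ p0])
  have p1: "0 \<le> 1 - p" using p_le1 by linarith
  have s2: "(1 - p) * Q2 \<le> (1 - p) * P" by (rule mult_left_mono[OF Q2P p1])
  have s3: "(p * c_const k + (1 - p)) * P \<le> c_const (Suc k) * P"
    by (rule mult_right_mono[OF c_step[OF p_half p_le1] P0])
  have "p * (a1 * Q1) + (1 - p) * Q2 \<le> (p * c_const k + (1 - p)) * P"
    using s1 s2 by (simp add: algebra_simps)
  with s3 show ?thesis unfolding LHS1 RHS Q2_def[symmetric] by linarith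
qed

end
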